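(* Let $k \geq 3$ be an integer and let $n$ be a $k$-admissible integer such that $n \in \{2k,2k+1\}$. Any non-reducible partial $k$-star design of order $n$ with $u(n,k)$ stars is completable.
   Context: A $k$-star is a copy of $K_{1,k}$; its vertex of degree $k$ is the centre and the others are leaves. A partial $k$-star design of order $n$ is a pair $(V,\mathcal{A})$ where $V$ is a set of $n$ vertices and $\mathcal{A}$ is a set of edge-disjoint $k$-stars that are subgraphs of the complete graph $K_V$; it is completable if there is a set $\mathcal{B}\supseteq\mathcal{A}$ of edge-disjoint $k$-stars in $K_V$ covering all edges of $K_V$. A positive integer $n$ is $k$-admissible if $\binom{n}{2}\equiv 0 \pmod{k}$. Here \[u(n,k)= \begin{cases} 2 \lfloor \frac{n-2}{k} \rfloor-1 & \text{if $n \not \equiv 1\pmod{k}$},\\ \frac{2(n-1)}{k} - 2 & \text{if $n \equiv 1\pmod{k}$.} \end{cases} \] A partial $k$-star design $(V,\mathcal{A})$ of order $n$ is reducible if $n \equiv 1 \pmod{k}$, $|\mathcal{A}|=u(n,k)$, and there is a vertex which is the centre of at least one star in $\mathcal{A}$ and is not a leaf of any star in $\mathcal{A}$; otherwise it is non-reducible. *)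

theory Defs
  imports Complex_Main
begin

text \<open>A k-star is represented by the pair (centre, set of leaves).\<close>
type_synonym 'a star = "'a \<times> 'a set"

definition star_edges :: "'a star \<Rightarrow> 'a set set" where
  "star_edges S = (\<lambda>l. {fst S, l}) ` snd S"

definition complete_edges :: "'a set \<Rightarrow> 'a set set" where
  "complete_edges V = {e. e \<subseteq> V \<and> card e = 2}"

definition is_kstar_in :: "nat \<Rightarrow> 'a set \<Rightarrow> 'a star \<Rightarrow> bool" where
  "is_kstar_in k V S \<longleftrightarrow> fst S \<in> V \<and> snd S \<subseteq> V - {fst S} \<and> card (snd S) = k"

definition edge_disjoint :: "'a star set \<Rightarrow> bool" where
  "edge_disjoint A \<longleftrightarrow>
     (\<forall>S\<in>A. \<forall>T\<in>A. S \<noteq> T \<longrightarrow> star_edges S \<inter> star_edges T = {})"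

definition partial_star_design :: "nat \<Rightarrow> nat \<Rightarrow> 'a set \<Rightarrow> 'a star set \<Rightarrow> bool" where
  "partial_star_design k n V A \<longleftrightarrow> finite V \<and> card V = n \<and>
     (\<forall>S\<in>A. is_kstar_in k V S) \<and> edge_disjoint A"

definition completable :: "nat \<Rightarrow> 'a set \<Rightarrow> 'a star set \<Rightarrow> bool" where
  "completable k V A \<longleftrightarrow> (\<exists>B. A \<subseteq> B \<and> (\<forall>S\<in>B. is_kstar_in k V S) \<and> edge_disjoint B
      \<and> (\<Union>S\<in>B. star_edges S) = complete_edges V)"

definition k_admissible :: "nat \<Rightarrow> nat \<Rightarrow> bool" where
  "k_admissible k n \<longleftrightarrow> (n choose 2) mod k = 0"

definition u_bound :: "nat \<Rightarrow> nat \<Rightarrow> int" where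
  "u_bound n k = (if n mod k \<noteq> 1 mod k
      then 2 * \<lfloor>(real n - 2) / real k\<rfloor> - 1
      else 2 * (int n - 1) div int k - 2)"

definition reducible :: "nat \<Rightarrow> nat \<Rightarrow> 'a star set \<Rightarrow> bool" where
  "reducible k n A \<longleftrightarrow> n mod k = 1 mod k \<and> int (card A) = u_bound n k \<and>
     (\<exists>v. (\<exists>S\<in>A. fst S = v) \<and> (\<forall>S\<in>A. v \<notin> snd S))"

end

theory Submission imports Defs begin

definition rot :: "nat \<Rightarrow> nat \<Rightarrow> nat \<Rightarrow> nat" where
  "rot m i j = (if i+j<m then i+j else i+j-m)"

definition lv :: "nat \<Rightarrow> nat \<Rightarrow> nat \<Rightarrow> nat set" where
  "lv m k i = rot m i ` {1..<k} \<union> {m}"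

lemma lv_sub: "i < m \<Longrightarrow> k \<le> m \<Longrightarrow> lv m k i \<subseteq> {0..m}"
  unfolding lv_def rot_def by auto

lemma lv_notin: assumes "i < m" "k \<le> m" shows "i \<notin> lv m k i"
  using assms unfolding lv_def rot_def by auto

lemma lv_card: assumes "k \<le> m" "i < m" "k \<ge> 1" shows "card (lv m k i) = k"
proof -
  have inj: "inj_on (rot m i) {1..<k}"
    using assms unfolding inj_on_def rot_def by auto
  have "m \<notin> rot m i ` {1..<k}" using assms unfolding rot_def by auto
  then show ?thesis proof -
    have "card (rot m i ` {1..<k}) = k - 1" using card_image[OF inj] by simp
    then show ?thesis unfolding lv_def using assms \<open>m \<notin> _\<close> by (simp add: card_insert_if)
  qed
qed

lemma lv_disj: assumes "m = 2*k-1" "k \<ge> 2" "i < m" "i' < m" "i \<noteq> i'"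
  "x \<in> lv m k i" "x' \<in> lv m k i'" "{i,x} = {i',x'}" shows False
proof -
  have "i = x'" "x = i'" using assms(5,8) by (auto simp: doubleton_eq_iff)
  then obtain j j' where j: "j \<in> {1..<k}" "j' \<in> {1..<k}" "i' = rot m i j" "i = rot m i' j'"
    using assms unfolding lv_def by auto
  have a: "i' = i + j \<or> i' + m = i + j" using j(3) unfolding rot_def by (cases "i+j<m") auto
  have b: "i = i' + j' \<or> i + m = i' + j'" using j(4) unfolding rot_def by (cases "i'+j'<m") auto
  show False using a b j(1,2) assms(1,2,3,4,5) by auto
qed

lemma lv_cover: assumes "m = 2*k-1" "k \<ge> 2" "a \<le> m" "b \<le> m" "a \<noteq> b"
  shows "\<exists>i<m. \<exists>x\<in>lv m k i. {a,b} = {i,x}"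
proof -
  { fix a b assume ab: "a \<le> m" "b \<le> m" "a < b"
    have "\<exists>i<m. \<exists>x\<in>lv m k i. {a,b} = {i,x}"
    proof (cases "b = m")
      case True then show ?thesis using ab unfolding lv_def by auto
    next
      case False
      show ?thesis
      proof (cases "b - a < k")
        case True
        have "b = rot m a (b-a)" "b - a \<in> {1..<k}" using ab False True unfolding rot_def by auto
        then show ?thesis using ab False unfolding lv_def by (intro exI[of _ a]) auto
      next
        case F2: False
        have "a = rot m b (m-(b-a))" "m-(b-a) \<in> {1..<k}" using ab False F2 assms unfolding rot_def by auto
        then have "a \<in> lv m k b" unfolding lv_def by auto
        then show ?thesis using ab False by (intro exI[of _ b]) auto
      qed
    qed }
  note * = this
  show ?thesis
  proof (cases "a < b")
    case True then show ?thesis using * assms by blast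
  next
    case False then have "b < a" using assms by auto
    then show ?thesis using *[of b a] assms by (auto simp: insert_commute)
  qed
qed

lemma inj_pair: assumes "inj_on g D" "a \<in> D" "b \<in> D" "c \<in> D" "d \<in> D"
  "{g a, g b} = {g c, g d}" shows "{a,b} = {c,d}"
  using assms by (auto simp: doubleton_eq_iff inj_on_eq_iff)

lemma u_even: assumes "k \<ge> 3" shows "u_bound (2*k) k = 1"
proof -
  have "(2*k) mod k \<noteq> 1 mod k" using assms by simp
  moreover have "\<lfloor>(real (2*k) - 2) / real k\<rfloor> = 1"
  proof (rule floor_unique)
    show "real_of_int 1 \<le> (real (2*k) - 2) / real k" using assms by (simp add: field_simps)
    show "(real (2*k) - 2) / real k < real_of_int 1 + 1" using assms by (simp add: field_simps)
  qed
  ultimately show ?thesis unfolding u_bound_def by simp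
qed

lemma u_odd: assumes "k \<ge> 3" shows "u_bound (2*k+1) k = 2" "(2*k+1) mod k = 1 mod k"
proof -
  have e: "2*k+1 = 1 + k*2" by simp
  show "(2*k+1) mod k = 1 mod k" unfolding e by (rule mod_mult_self2)
  have "2 * (int (2*k+1) - 1) div int k = 4" using assms by simp
  then show "u_bound (2*k+1) k = 2" unfolding u_bound_def using \<open>(2*k+1) mod k = 1 mod k\<close> by simp
qed

lemma odd_case:
  fixes A :: "'a star set"
  assumes "card A = 2" "\<forall>S\<in>A. is_kstar_in k V S" "edge_disjoint A"
    "\<forall>v. (\<exists>S\<in>A. fst S = v) \<longrightarrow> (\<exists>S\<in>A. v \<in> snd S)"
  shows False
proof -
  obtain S1 S2 where A: "A = {S1, S2}" "S1 \<noteq> S2" using assms(1) by (auto simp: card_2_iff)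
  have n1: "fst S1 \<notin> snd S1" "fst S2 \<notin> snd S2" using assms(2) A unfolding is_kstar_in_def by auto
  have "fst S1 \<in> snd S2" using assms(4) A n1 by auto
  moreover have "fst S2 \<in> snd S1" using assms(4) A n1 by auto
  ultimately have "{fst S1, fst S2} \<in> star_edges S1" "{fst S1, fst S2} \<in> star_edges S2"
    unfolding star_edges_def by (auto simp: insert_commute)
  then show False using assms(3) A unfolding edge_disjoint_def by blast
qed

theorem lemma9:
  fixes k n :: nat and V :: "'a set" and A :: "'a star set"
  assumes "k \<ge> 3"
    and "k_admissible k n"
    and "n \<in> {2*k, 2*k+1}"
    and "partial_star_design k n V A"
    and "\<not> reducible k n A"
    and "int (card A) = u_bound n k"
  shows "completable k V A"
proof -
  have PD: "finite V" "card V = n" "\<forall>S\<in>A. is_kstar_in k V S" "edge_disjoint A"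
    using assms(4) unfolding partial_star_design_def by auto
  consider "n = 2*k+1" | "n = 2*k" using assms(3) by auto
  then show ?thesis
  proof cases
    case 1
    then have "card A = 2" using u_odd[OF assms(1)] assms(6) by simp
    moreover have "\<forall>v. (\<exists>S\<in>A. fst S = v) \<longrightarrow> (\<exists>S\<in>A. v \<in> snd S)"
      using assms(5) u_odd[OF assms(1)] 1 \<open>card A = 2\<close> unfolding reducible_def by auto
    ultimately show ?thesis using odd_case PD by blast
  next
    case 2
    then have "card A = 1" using u_even[OF assms(1)] assms(6) by simp
    then obtain c L where AS: "A = {(c, L)}" by (auto simp: card_1_singleton_iff)
    then have cL: "c \<in> V" "L \<subseteq> V - {c}" "card L = k" using PD(3) unfolding is_kstar_in_def by auto
    define m where "m = 2*k-1"
    define R where "R = V - L - {c}"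
    have finL: "finite L" using cL PD(1) finite_subset by blast
    have cnL: "c \<notin> L" using cL by auto
    have RV: "R = V - insert c L" unfolding R_def by auto
    have cR: "card R = k - 1" unfolding RV using cL PD 2 finL cnL
      by (subst card_Diff_subset) auto
    have finR: "finite R" using PD(1) unfolding R_def by auto
    have mI: "m \<notin> {1..<k}" using assms(1) unfolding m_def by auto
    have cI: "card ({1..<k} \<union> {m}) = k"
    proof -
      have "card (insert m {1..<k}) = Suc (card {1..<k})" using mI by simp
      then show ?thesis using assms(1) by simp
    qed
    obtain h1 where h1: "bij_betw h1 ({1..<k} \<union> {m}) L"
      using finite_same_card_bij[of "{1..<k} \<union> {m}" L] finL cL cI by auto
    obtain h2 where h2: "bij_betw h2 {k..<m} R"
      using finite_same_card_bij[of "{k..<m}" R] finR cR unfolding m_def by auto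
    define g where "g i = (if i = 0 then c else if i \<in> {1..<k} \<union> {m} then h1 i else h2 i)" for i
    have g1: "bij_betw g ({1..<k} \<union> {m}) L"
      using h1 by (rule bij_betw_cong[THEN iffD1, rotated]) (use assms(1) in \<open>auto simp: g_def m_def\<close>)
    have g2: "bij_betw g {k..<m} R"
      using h2 by (rule bij_betw_cong[THEN iffD1, rotated]) (auto simp: g_def m_def)
    have g0: "bij_betw g {0} {c}" by (simp add: g_def bij_betw_def)
    have "bij_betw g ({0} \<union> ({1..<k} \<union> {m}) \<union> {k..<m}) ({c} \<union> L \<union> R)"
      by (rule bij_betw_combine[OF bij_betw_combine[OF g0 g1] g2]) (use cnL in \<open>auto simp: R_def\<close>)
    moreover have "{0} \<union> ({1..<k} \<union> {m}) \<union> {k..<m} = {0..m}" unfolding m_def using assms(1) by auto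
    moreover have "{c} \<union> L \<union> R = V" using cL unfolding R_def by auto
    ultimately have gb: "bij_betw g {0..m} V" by simp
    have ginj: "inj_on g {0..m}" and gim: "g ` {0..m} = V" using gb by (auto simp: bij_betw_def)
    have k1: "k \<ge> 2" "k \<le> m" "m = 2*k-1" using assms(1) unfolding m_def by auto
    define B where "B = (\<lambda>i. (g i, g ` lv m k i)) ` {0..<m}"
    have lv0: "lv m k 0 = {1..<k} \<union> {m}" unfolding lv_def rot_def using k1 by auto
    have "g ` lv m k 0 = L" using g1 unfolding lv0 bij_betw_def by auto
    moreover have "g 0 = c" by (simp add: g_def)
    ultimately have AB: "A \<subseteq> B" unfolding AS B_def using k1 by force
    have SE: "star_edges (g i, g ` lv m k i) = (\<lambda>x. {g i, g x}) ` lv m k i" for i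
      unfolding star_edges_def by auto
    have kst: "\<forall>S\<in>B. is_kstar_in k V S"
    proof
      fix S assume "S \<in> B"
      then obtain i where i: "i < m" "S = (g i, g ` lv m k i)" unfolding B_def by auto
      have sub: "lv m k i \<subseteq> {0..m}" using lv_sub i k1 by auto
      have ni: "i \<notin> lv m k i" using lv_notin i k1 by auto
      have "g i \<in> V" using gim i by auto
      moreover have "g ` lv m k i \<subseteq> V - {g i}"
        using sub ni gim i ginj by (auto simp: inj_on_eq_iff)
      moreover have "card (g ` lv m k i) = k"
        using card_image[OF inj_on_subset[OF ginj sub]] lv_card i k1 by simp
      ultimately show "is_kstar_in k V S" unfolding is_kstar_in_def i by simp
    qed
    have ed: "edge_disjoint B"
      unfolding edge_disjoint_def
    proof (intro ballI impI)
      fix S T assume "S \<in> B" "T \<in> B" "S \<noteq> T"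
      obtain i where i1: "i < m" "S = (g i, g ` lv m k i)" using \<open>S \<in> B\<close> unfolding B_def by auto
      obtain i' where i2: "i' < m" "T = (g i', g ` lv m k i')" using \<open>T \<in> B\<close> unfolding B_def by auto
      have "i \<noteq> i'" using i1 i2 \<open>S \<noteq> T\<close> by auto
      note i = i1 i2 this
      show "star_edges S \<inter> star_edges T = {}"
      proof (rule ccontr)
        assume "star_edges S \<inter> star_edges T \<noteq> {}"
        then obtain x x' where x: "x \<in> lv m k i" "x' \<in> lv m k i'" "{g i, g x} = {g i', g x'}"
          unfolding i SE by auto
        have "{i, x} = {i', x'}"
          by (rule inj_pair[OF ginj _ _ _ _ x(3)]) (use x i lv_sub[of i m k] lv_sub[of i' m k] k1 in auto)
        then show False using lv_disj[OF k1(3) k1(1) i(1) i(3) i(5) x(1) x(2)] by simp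
      qed
    qed
    have cov: "(\<Union>S\<in>B. star_edges S) = complete_edges V"
    proof
      show "(\<Union>S\<in>B. star_edges S) \<subseteq> complete_edges V"
      proof
        fix e assume "e \<in> (\<Union>S\<in>B. star_edges S)"
        then obtain S where S: "S \<in> B" "e \<in> star_edges S" by auto
        then have "is_kstar_in k V S" using kst by auto
        then show "e \<in> complete_edges V" using S(2) unfolding star_edges_def is_kstar_in_def complete_edges_def
          by (auto simp: card_insert_if)
      qed
      show "complete_edges V \<subseteq> (\<Union>S\<in>B. star_edges S)"
      proof
        fix e assume "e \<in> complete_edges V"
        then obtain p q where e: "e = {p, q}" "p \<noteq> q" "p \<in> V" "q \<in> V"
          unfolding complete_edges_def by (auto simp: card_2_iff)
        obtain a b where ab: "a \<in> {0..m}" "b \<in> {0..m}" "p = g a" "q = g b" using e gim by blast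
        have "a \<noteq> b" using ab e by auto
        then obtain i x where ix: "i < m" "x \<in> lv m k i" "{a, b} = {i, x}"
          using lv_cover[OF k1(3) k1(1), of a b] ab(1,2) by auto
        have "e = g ` {a, b}" using e(1) ab(3,4) by simp
        also have "\<dots> = {g i, g x}" unfolding ix(3) by simp
        finally have "e = {g i, g x}" .
        then have "e \<in> star_edges (g i, g ` lv m k i)" using SE ix by auto
        moreover have "(g i, g ` lv m k i) \<in> B" unfolding B_def using ix by auto
        ultimately show "e \<in> (\<Union>S\<in>B. star_edges S)" by blast
      qed
    qed
    show ?thesis unfolding completable_def using AB kst ed cov by blast
  qed
qed

end
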